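(* Let $(X,d)$ be a metric space, $\mu$ a non-atomic Borel measure on $X$, $m$ a Borel measure on $X$, $0<p<\infty$, and let $\Gamma^*\subset\Gamma^\mu$ be a family of paths closed under taking non-trivial subpaths such that any two points of $X$ are joined by a path in $\Gamma^*$. Let $F\subset X$ satisfy $$\inf\{\|f\|_{N^{1,p}}: f\in\tilde N^{1,p}(X),\ f|_F\ge1\}=0.$$ Then $\mathrm{Mod}_p(\Gamma_F)=0$, where $\Gamma_F=\{\gamma\in\Gamma^*:\mathrm{Im}(\gamma)\cap F\neq\emptyset\}$.
   Context: A path is a continuous map $\gamma:[a,b]\to X$; a subpath is a restriction to a subinterval, trivial if that interval is a point; $\mathrm{Im}(\gamma)=\gamma([a,b])$. $\mu$ non-atomic: $\mu(\{x\})=0$ for all $x$. $\Gamma^\mu$ is the set of all non-trivial injective paths $\gamma$ with $0<\mu(\mathrm{Im}(\tilde\gamma))<\infty$ for every non-trivial subpath $\tilde\gamma$. For Borel $g\ge0$, $\int_\gamma g:=\int_{\mathrm{Im}(\gamma)}g\,d\mu$. For $\Gamma\subset\Gamma^*$, $\mathrm{Mod}_p(\Gamma)=\inf\int_Xg^p\,dm$ over Borel $g\ge0$ with $\int_\gamma g\ge1$ for all $\gamma\in\Gamma$. A Borel $\rho\ge0$ is a $p$-weak upper gradient of $f$ if $|f(x)-f(y)|\le\int_\gamma\rho$ for all $\gamma\in\Gamma^*$ outside a family of $p$-modulus zero, $x,y$ the endpoints of $\gamma$. $\tilde N^{1,p}(X)$ is the set of $f\in L^p(m)$ having a $p$-weak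 upper gradient in $L^p(m)$, with $\|f\|_{N^{1,p}}=\|f\|_{L^p(m)}+\inf_\rho\|\rho\|_{L^p(m)}$ over all $p$-weak upper gradients $\rho$ of $f$. *)

theory Defs
  imports "HOL-Analysis.Analysis"
begin

definition epow :: "ennreal \<Rightarrow> real \<Rightarrow> ennreal" where
  "epow x q = (if x = \<infinity> then \<infinity> else ennreal (enn2real x powr q))"

text \<open>A path is a triple (a, b, g) standing for the map g restricted to [a,b].\<close>
type_synonym 'a path = "real \<times> real \<times> (real \<Rightarrow> 'a)"

definition is_path :: "'a::topological_space path \<Rightarrow> bool" where
  "is_path \<gamma> = (case \<gamma> of (a, b, g) \<Rightarrow> a \<le> b \<and> continuous_on {a..b} g)"

definition Im :: "'a path \<Rightarrow> 'a set" where
  "Im \<gamma> = (case \<gamma> of (a, b, g) \<Rightarrow> g ` {a..b})"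

definition start_pt :: "'a path \<Rightarrow> 'a" where
  "start_pt \<gamma> = (case \<gamma> of (a, b, g) \<Rightarrow> g a)"

definition end_pt :: "'a path \<Rightarrow> 'a" where
  "end_pt \<gamma> = (case \<gamma> of (a, b, g) \<Rightarrow> g b)"

definition nontriv_subpaths :: "'a path \<Rightarrow> 'a path set" where
  "nontriv_subpaths \<gamma> = (case \<gamma> of (a, b, g) \<Rightarrow> {(c, d, g) | c d. a \<le> c \<and> c < d \<and> d \<le> b})"

definition Gamma_mu :: "'a::metric_space measure \<Rightarrow> 'a path set" where
  "Gamma_mu \<mu> = {\<gamma>. is_path \<gamma> \<and> fst \<gamma> < fst (snd \<gamma>)
      \<and> inj_on (snd (snd \<gamma>)) {fst \<gamma>..fst (snd \<gamma>)}
      \<and> (\<forall>\<sigma>\<in>nontriv_subpaths \<gamma>. 0 < emeasure \<mu> (Im \<sigma>) \<and> emeasure \<mu> (Im \<sigma>) < \<infinity>)}"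

definition line_int :: "'a measure \<Rightarrow> 'a path \<Rightarrow> ('a \<Rightarrow> ennreal) \<Rightarrow> ennreal" where
  "line_int \<mu> \<gamma> g = (\<integral>\<^sup>+ x. g x * indicator (Im \<gamma>) x \<partial>\<mu>)"

definition Mod :: "real \<Rightarrow> 'a::metric_space measure \<Rightarrow> 'a measure \<Rightarrow> 'a path set \<Rightarrow> ennreal" where
  "Mod p m \<mu> \<Gamma> = (INF g \<in> {g. g \<in> borel_measurable borel \<and> (\<forall>\<gamma>\<in>\<Gamma>. line_int \<mu> \<gamma> g \<ge> 1)}.
      \<integral>\<^sup>+ x. epow (g x) p \<partial>m)"

definition weak_upper_gradient ::
  "real \<Rightarrow> 'a::metric_space measure \<Rightarrow> 'a measure \<Rightarrow> 'a path set \<Rightarrow> ('a \<Rightarrow> real) \<Rightarrow> ('a \<Rightarrow> ennreal) \<Rightarrow> bool" where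
  "weak_upper_gradient p m \<mu> \<Gamma>s f \<rho> \<longleftrightarrow> \<rho> \<in> borel_measurable borel \<and>
     (\<exists>\<Gamma>0 \<subseteq> \<Gamma>s. Mod p m \<mu> \<Gamma>0 = 0 \<and>
        (\<forall>\<gamma>\<in>\<Gamma>s - \<Gamma>0. ennreal \<bar>f (start_pt \<gamma>) - f (end_pt \<gamma>)\<bar> \<le> line_int \<mu> \<gamma> \<rho>))"

definition Lp_norm_real :: "real \<Rightarrow> 'a measure \<Rightarrow> ('a \<Rightarrow> real) \<Rightarrow> ennreal" where
  "Lp_norm_real p m f = epow (\<integral>\<^sup>+ x. ennreal (\<bar>f x\<bar> powr p) \<partial>m) (1 / p)"

definition Lp_norm_enn :: "real \<Rightarrow> 'a measure \<Rightarrow> ('a \<Rightarrow> ennreal) \<Rightarrow> ennreal" where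
  "Lp_norm_enn p m \<rho> = epow (\<integral>\<^sup>+ x. epow (\<rho> x) p \<partial>m) (1 / p)"

definition N1p_tilde ::
  "real \<Rightarrow> 'a::metric_space measure \<Rightarrow> 'a measure \<Rightarrow> 'a path set \<Rightarrow> ('a \<Rightarrow> real) set" where
  "N1p_tilde p m \<mu> \<Gamma>s = {f. f \<in> borel_measurable m \<and> Lp_norm_real p m f < \<infinity> \<and>
      (\<exists>\<rho>. weak_upper_gradient p m \<mu> \<Gamma>s f \<rho> \<and> Lp_norm_enn p m \<rho> < \<infinity>)}"

definition N1p_norm ::
  "real \<Rightarrow> 'a::metric_space measure \<Rightarrow> 'a measure \<Rightarrow> 'a path set \<Rightarrow> ('a \<Rightarrow> real) \<Rightarrow> ennreal" where
  "N1p_norm p m \<mu> \<Gamma>s f = Lp_norm_real p m f +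
      (INF \<rho> \<in> {\<rho>. weak_upper_gradient p m \<mu> \<Gamma>s f \<rho>}. Lp_norm_enn p m \<rho>)"

end

theory Submission
  imports Defs
begin

lemma epow_meas[measurable]: assumes "g \<in> borel_measurable M" shows "(\<lambda>x. epow (g x) p) \<in> borel_measurable M"
proof -
  have "{x\<in>space M. g x = \<infinity>} \<in> sets M" using assms by measurable
  moreover have "(\<lambda>x. ennreal (enn2real (g x) powr p)) \<in> borel_measurable M" using assms by measurable
  ultimately show ?thesis unfolding epow_def by (intro measurable_If) auto
qed

lemma epow_mono: assumes "0 \<le> p" "a \<le> b" shows "epow a p \<le> epow b p"
proof (cases "b = \<infinity>")
  case True then show ?thesis by (simp add: epow_def)
next
  case False
  then have "a \<noteq> \<infinity>" using assms top.extremum_unique by fastforce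
  moreover have "enn2real a \<le> enn2real b" using False assms(2) by (simp add: enn2real_mono top.not_eq_extremum)
  ultimately show ?thesis using False assms by (simp add: epow_def powr_mono2)
qed

lemma epow_ennreal: "0 \<le> r \<Longrightarrow> epow (ennreal r) p = ennreal (r powr p)"
  by (simp add: epow_def)

lemma epow_cmult: assumes "0 < c" shows "epow (ennreal c * x) p = ennreal (c powr p) * epow x p"
proof (cases "x = \<infinity>")
  case True
  then show ?thesis using assms by (simp add: epow_def ennreal_mult_top)
next
  case False
  then obtain r where r: "x = ennreal r" "0 \<le> r" by (cases x) auto
  have e: "ennreal c * ennreal r = ennreal (c * r)" using assms r by (simp add: ennreal_mult)
  have "epow (ennreal c * x) p = ennreal ((c * r) powr p)" using assms r by (simp add: e epow_def)
  also have "\<dots> = ennreal (c powr p) * ennreal (r powr p)" using assms r by (simp add: powr_mult ennreal_mult)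
  finally show ?thesis using r by (simp add: epow_def)
qed

lemma epow_max: "0 \<le> p \<Longrightarrow> epow (max a b) p \<le> epow a p + epow b p"
  by (cases "a \<le> b") (auto simp: max_def intro: add_increasing add_increasing2)

lemma epow_SUP: assumes "0 < p"
  shows "epow (SUP n. g n) p \<le> (\<Sum>n. epow (g n) p)"
proof (cases "(\<Sum>n. epow (g n) p) = \<infinity>")
  case True then show ?thesis by simp
next
  case False
  then obtain s where s: "(\<Sum>n. epow (g n) p) = ennreal s" "0 \<le> s" by (cases "(\<Sum>n. epow (g n) p)") auto
  have bnd: "g n \<le> ennreal (s powr (1/p))" for n
  proof -
    have le: "epow (g n) p \<le> ennreal s" using sum_le_suminf[of "\<lambda>n. epow (g n) p" "{n}"] s by simp
    then have ninf: "g n \<noteq> \<infinity>" by (auto simp: epow_def top_unique)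
    then have "enn2real (g n) powr p \<le> s" using le s(2) by (simp add: epow_def)
    then have "(enn2real (g n) powr p) powr (1/p) \<le> s powr (1/p)"
      using assms by (intro powr_mono2) auto
    then have "enn2real (g n) \<le> s powr (1/p)" using assms by (simp add: powr_powr)
    then show ?thesis using ninf by (cases "g n") (auto intro: ennreal_leI)
  qed
  have "epow (SUP n. g n) p \<le> epow (ennreal (s powr (1/p))) p"
    using assms by (intro epow_mono) (auto intro: SUP_least bnd)
  also have "\<dots> = ennreal s" using assms s(2) by (simp add: epow_ennreal powr_powr)
  finally show ?thesis using s by simp
qed

lemma Mod_le: "g \<in> borel_measurable borel \<Longrightarrow> (\<forall>\<gamma>\<in>\<Gamma>. line_int \<mu> \<gamma> g \<ge> 1) \<Longrightarrow> Mod p m \<mu> \<Gamma> \<le> (\<integral>\<^sup>+x. epow (g x) p \<partial>m)"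
  unfolding Mod_def by (rule INF_lower) auto

lemma Mod_zeroD: "Mod p m \<mu> \<Gamma> = 0 \<Longrightarrow> 0 < e \<Longrightarrow> \<exists>g. g \<in> borel_measurable borel \<and> (\<forall>\<gamma>\<in>\<Gamma>. line_int \<mu> \<gamma> g \<ge> 1) \<and> (\<integral>\<^sup>+x. epow (g x) p \<partial>m) < e"
proof -
  assume a: "Mod p m \<mu> \<Gamma> = 0" "0 < e"
  then have "Mod p m \<mu> \<Gamma> < e" by simp
  then show ?thesis unfolding Mod_def INF_less_iff by auto
qed

lemma Mod_zeroI: "(\<And>e::real. 0 < e \<Longrightarrow> Mod p m \<mu> \<Gamma> \<le> ennreal e) \<Longrightarrow> Mod p m \<mu> \<Gamma> = 0"
proof -
  assume a: "\<And>e::real. 0 < e \<Longrightarrow> Mod p m \<mu> \<Gamma> \<le> ennreal e"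
  have "Mod p m \<mu> \<Gamma> \<le> 0" by (rule ennreal_le_epsilon) (simp add: a)
  then show ?thesis by simp
qed

lemma line_int_mono: "Im \<sigma> \<subseteq> Im \<gamma> \<Longrightarrow> (\<And>x. g x \<le> h x) \<Longrightarrow> line_int \<mu> \<sigma> g \<le> line_int \<mu> \<gamma> h"
  unfolding line_int_def
  by (intro nn_integral_mono) (auto intro: mult_mono split: split_indicator)

lemma meas_conv: "sets m = sets borel \<Longrightarrow> g \<in> borel_measurable borel \<Longrightarrow> g \<in> borel_measurable m"
  using measurable_cong_sets[of m borel borel borel] by simp

lemma Mod_countable:
  fixes G :: "nat \<Rightarrow> 'a::metric_space path set"
  assumes p: "0 < p" and sm: "sets m = sets borel"
    and cov: "\<Gamma> \<subseteq> (\<Union>n. G n)" and z: "\<And>n. Mod p m \<mu> (G n) = 0"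
  shows "Mod p m \<mu> \<Gamma> = 0"
proof (rule Mod_zeroI)
  fix e :: real assume e: "0 < e"
  have "\<forall>n. \<exists>g. g \<in> borel_measurable borel \<and> (\<forall>\<gamma>\<in>G n. line_int \<mu> \<gamma> g \<ge> 1) \<and> (\<integral>\<^sup>+x. epow (g x) p \<partial>m) < ennreal (e * (1/2)^Suc n)"
    using z e by (intro allI Mod_zeroD) auto
  then obtain g where g: "\<And>n. g n \<in> borel_measurable borel" "\<And>n. \<forall>\<gamma>\<in>G n. line_int \<mu> \<gamma> (g n) \<ge> 1"
     "\<And>n. (\<integral>\<^sup>+x. epow (g n x) p \<partial>m) < ennreal (e * (1/2)^Suc n)"
    by metis
  define H where "H x = (SUP n. g n x)" for x
  have Hm: "H \<in> borel_measurable borel" unfolding H_def using g(1) by measurable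
  have Ha: "\<forall>\<gamma>\<in>\<Gamma>. line_int \<mu> \<gamma> H \<ge> 1"
  proof
    fix \<gamma> assume "\<gamma> \<in> \<Gamma>"
    then obtain n where "\<gamma> \<in> G n" using cov by auto
    then have "1 \<le> line_int \<mu> \<gamma> (g n)" using g(2) by auto
    also have "\<dots> \<le> line_int \<mu> \<gamma> H" unfolding H_def by (intro line_int_mono) (auto intro: SUP_upper)
    finally show "1 \<le> line_int \<mu> \<gamma> H" .
  qed
  have "Mod p m \<mu> \<Gamma> \<le> (\<integral>\<^sup>+x. epow (H x) p \<partial>m)" by (rule Mod_le[OF Hm Ha])
  also have "\<dots> \<le> (\<integral>\<^sup>+x. (\<Sum>n. epow (g n x) p) \<partial>m)"
    unfolding H_def using p by (intro nn_integral_mono epow_SUP) auto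
  also have "\<dots> = (\<Sum>n. \<integral>\<^sup>+x. epow (g n x) p \<partial>m)"
    using g(1) sm by (intro nn_integral_suminf) (auto intro: epow_meas meas_conv)
  also have "\<dots> \<le> (\<Sum>n. ennreal (e * (1/2)^Suc n))"
    by (rule suminf_le[OF less_imp_le[OF g(3)]]) auto
  also have "\<dots> = ennreal e"
  proof -
    have "(\<lambda>n. e * (1/2)^Suc n) sums (e * 1)" by (intro sums_mult power_half_series)
    then have "(\<lambda>n. ennreal (e * (1/2)^Suc n)) sums ennreal e" using e by (subst sums_ennreal) auto
    then show ?thesis by (rule sums_unique[symmetric])
  qed
  finally show "Mod p m \<mu> \<Gamma> \<le> ennreal e" .
qed

lemma small_int: assumes "epow I (1/p) < ennreal (\<eta> powr (1/p))" "0 < p" "0 < \<eta>" shows "I < ennreal \<eta>"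
proof -
  have "I \<noteq> \<infinity>" using assms(1) by (auto simp: epow_def)
  then obtain i where i: "I = ennreal i" "0 \<le> i" by (cases I) auto
  then have lt: "i powr (1/p) < \<eta> powr (1/p)" using assms(1) by (simp add: epow_def ennreal_less_iff)
  have "i < \<eta>"
  proof (rule ccontr)
    assume "\<not> i < \<eta>"
    then have "\<eta> powr (1/p) \<le> i powr (1/p)" using assms by (intro powr_mono2) auto
    then show False using lt by simp
  qed
  then show ?thesis using i assms by (simp add: ennreal_lessI)
qed

lemma Im_sets: fixes \<gamma> :: "'a::metric_space path" assumes "is_path \<gamma>" "sets \<mu> = sets borel" shows "Im \<gamma> \<in> sets \<mu>"
proof -
  obtain a b g where \<gamma>: "\<gamma> = (a, b, g)" by (cases \<gamma>) auto
  then have "continuous_on {a..b} g" using assms by (simp add: is_path_def)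
  then have "compact (g ` {a..b})" by (intro compact_continuous_image) auto
  then have "closed (Im \<gamma>)" using \<gamma> by (simp add: Im_def compact_imp_closed)
  then show ?thesis using assms by simp
qed

lemma key:
  fixes \<mu> :: "'a::metric_space measure" and f :: "'a \<Rightarrow> real"
  assumes s\<mu>: "sets \<mu> = sets borel" and \<gamma>: "\<gamma> \<in> \<Gamma>s" and sub: "\<Gamma>s \<subseteq> Gamma_mu \<mu>"
    and clo: "\<And>\<gamma> \<sigma>. \<gamma> \<in> \<Gamma>s \<Longrightarrow> \<sigma> \<in> nontriv_subpaths \<gamma> \<Longrightarrow> \<sigma> \<in> \<Gamma>s"
    and x0: "x0 \<in> Im \<gamma>" "1 \<le> f x0"
    and notin: "\<forall>\<sigma>\<in>nontriv_subpaths \<gamma>. \<sigma> \<notin> \<Gamma>0"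
    and wug: "\<forall>\<sigma>\<in>\<Gamma>s - \<Gamma>0. ennreal \<bar>f (start_pt \<sigma>) - f (end_pt \<sigma>)\<bar> \<le> line_int \<mu> \<sigma> \<rho>"
    and \<rho>m: "\<rho> \<in> borel_measurable borel"
    and big: "1 \<le> ennreal (real (Suc n)) * emeasure \<mu> (Im \<gamma>)"
  shows "1 \<le> line_int \<mu> \<gamma> (\<lambda>x. max (ennreal 2 * \<rho> x) (ennreal (2 * real (Suc n)) * ennreal \<bar>f x\<bar>))"
    (is "1 \<le> line_int \<mu> \<gamma> ?h")
proof -
  obtain a b g where \<gamma>eq: "\<gamma> = (a, b, g)" by (cases \<gamma>) auto
  have ispath: "is_path \<gamma>" using \<gamma> sub by (auto simp: Gamma_mu_def)
  have Imeq: "Im \<gamma> = g ` {a..b}" using \<gamma>eq by (simp add: Im_def)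
  obtain s0 where s0: "s0 \<in> {a..b}" "x0 = g s0" using x0 Imeq by auto
  define L where "L = line_int \<mu> \<gamma> \<rho>"
  have A: "ennreal \<bar>f x0 - f (g t)\<bar> \<le> L" if t: "t \<in> {a..b}" for t
  proof (cases "t = s0")
    case True then show ?thesis using s0 by simp
  next
    case False
    define \<sigma> where "\<sigma> = (min s0 t, max s0 t, g)"
    have \<sigma>n: "\<sigma> \<in> nontriv_subpaths \<gamma>" using False s0 t \<gamma>eq
      by (auto simp: \<sigma>_def nontriv_subpaths_def min_def max_def)
    then have "\<sigma> \<in> \<Gamma>s - \<Gamma>0" using clo \<gamma> notin by auto
    then have "ennreal \<bar>f (start_pt \<sigma>) - f (end_pt \<sigma>)\<bar> \<le> line_int \<mu> \<sigma> \<rho>" using wug by auto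
    also have "\<dots> \<le> L" unfolding L_def
      using s0 t by (intro line_int_mono) (auto simp: \<sigma>_def \<gamma>eq Im_def min_def max_def)
    finally show ?thesis using s0
      by (auto simp: \<sigma>_def start_pt_def end_pt_def min_def max_def abs_minus_commute split: if_splits)
  qed
  have Is: "Im \<gamma> \<in> sets \<mu>" by (rule Im_sets[OF ispath s\<mu>])
  show ?thesis
  proof (cases "ennreal (1/2) \<le> L")
    case True
    have "1 = ennreal 2 * ennreal (1/2)" by (subst ennreal_mult[symmetric]) auto
    also have "\<dots> \<le> ennreal 2 * L" using True by (intro mult_left_mono) auto
    also have "\<dots> = line_int \<mu> \<gamma> (\<lambda>x. ennreal 2 * \<rho> x)"
      unfolding L_def line_int_def using \<rho>m Is s\<mu>
      by (subst nn_integral_cmult[symmetric]) (auto simp: mult.assoc measurable_cong_sets[OF s\<mu> refl])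
    also have "\<dots> \<le> line_int \<mu> \<gamma> ?h" by (intro line_int_mono) auto
    finally show ?thesis .
  next
    case False
    have fy: "ennreal (real (Suc n)) \<le> ?h y" if y: "y \<in> Im \<gamma>" for y
    proof -
      obtain t where t: "t \<in> {a..b}" "y = g t" using y Imeq by auto
      have "ennreal \<bar>f x0 - f y\<bar> < ennreal (1/2)" using A[OF t(1)] False t by auto
      then have "\<bar>f x0 - f y\<bar> < 1/2" using ennreal_less_iff[OF abs_ge_zero[of "f x0 - f y"], of "1/2"] by blast
      then have fy: "1/2 \<le> \<bar>f y\<bar>" using x0(2) by linarith
      have "ennreal (real (Suc n)) = ennreal (2 * real (Suc n) * (1/2))" by (rule arg_cong[where f=ennreal]) simp
      also have "\<dots> = ennreal (2 * real (Suc n)) * ennreal (1/2)" by (rule ennreal_mult) auto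
      also have "\<dots> \<le> ennreal (2 * real (Suc n)) * ennreal \<bar>f y\<bar>" using fy by (intro mult_left_mono ennreal_leI) auto
      also have "\<dots> \<le> ?h y" by simp
      finally show ?thesis .
    qed
    have "1 \<le> ennreal (real (Suc n)) * emeasure \<mu> (Im \<gamma>)" by (rule big)
    also have "\<dots> = (\<integral>\<^sup>+x. ennreal (real (Suc n)) * indicator (Im \<gamma>) x \<partial>\<mu>)"
      using Is by (simp add: nn_integral_cmult_indicator)
    also have "\<dots> \<le> line_int \<mu> \<gamma> ?h" unfolding line_int_def
      using fy by (intro nn_integral_mono) (auto split: split_indicator)
    finally show ?thesis .
  qed
qed
theorem lemma4p2:
  fixes \<mu> m :: "'a::metric_space measure" and p :: real
    and \<Gamma>s :: "'a path set" and F :: "'a set"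
  assumes "sets \<mu> = sets borel" and "sets m = sets borel"
    and "\<And>x. emeasure \<mu> {x} = 0"
    and "0 < p"
    and "\<Gamma>s \<subseteq> Gamma_mu \<mu>"
    and "\<And>\<gamma> \<sigma>. \<gamma> \<in> \<Gamma>s \<Longrightarrow> \<sigma> \<in> nontriv_subpaths \<gamma> \<Longrightarrow> \<sigma> \<in> \<Gamma>s"
    and "\<And>x y. x \<noteq> y \<Longrightarrow> \<exists>\<gamma>\<in>\<Gamma>s. start_pt \<gamma> = x \<and> end_pt \<gamma> = y"
    and "(INF f \<in> {f \<in> N1p_tilde p m \<mu> \<Gamma>s. \<forall>x\<in>F. f x \<ge> 1}. N1p_norm p m \<mu> \<Gamma>s f) = 0"
  shows "Mod p m \<mu> {\<gamma> \<in> \<Gamma>s. Im \<gamma> \<inter> F \<noteq> {}} = 0"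
proof -
  define \<Gamma>F where "\<Gamma>F = {\<gamma> \<in> \<Gamma>s. Im \<gamma> \<inter> F \<noteq> {}}"
  define G where "G n = {\<gamma> \<in> \<Gamma>F. 1 \<le> ennreal (real (Suc n)) * emeasure \<mu> (Im \<gamma>)}" for n
  have cov: "\<Gamma>F \<subseteq> (\<Union>n. G n)"
  proof
    fix \<gamma> assume \<gamma>: "\<gamma> \<in> \<Gamma>F"
    then have \<gamma>mu: "\<gamma> \<in> Gamma_mu \<mu>" using assms(5) \<Gamma>F_def by auto
    obtain a b g where \<gamma>eq: "\<gamma> = (a,b,g)" by (cases \<gamma>) auto
    have "\<gamma> \<in> nontriv_subpaths \<gamma>" using \<gamma>mu \<gamma>eq by (auto simp: Gamma_mu_def nontriv_subpaths_def)
    then have pos: "0 < emeasure \<mu> (Im \<gamma>)" "emeasure \<mu> (Im \<gamma>) < \<infinity>" using \<gamma>mu by (auto simp: Gamma_mu_def)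
    then obtain r where r: "emeasure \<mu> (Im \<gamma>) = ennreal r" "0 \<le> r" by (cases "emeasure \<mu> (Im \<gamma>)") auto
    then have rpos: "0 < r" using pos by auto
    obtain n where n: "inverse (real (Suc n)) < r" using reals_Archimedean[OF rpos] by blast
    then have "1 < real (Suc n) * r" by (simp add: field_simps)
    then have "ennreal 1 \<le> ennreal (real (Suc n) * r)" by (intro ennreal_leI) auto
    then have "1 \<le> ennreal (real (Suc n)) * emeasure \<mu> (Im \<gamma>)" using r by (simp add: ennreal_mult)
    then show "\<gamma> \<in> (\<Union>n. G n)" using \<gamma> G_def by auto
  qed
  have z: "Mod p m \<mu> (G n) = 0" for n
  proof (rule Mod_zeroI)
    fix e :: real assume e: "0 < e"
    define c where "c = 2 * real (Suc n)"
    have cpos: "0 < c" by (simp add: c_def)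
    define C where "C = 2 powr p + c powr p"
    have Cpos: "0 < C" by (simp add: C_def c_def add_pos_pos)
    define \<eta> where "\<eta> = e / (4 * C)"
    have \<eta>pos: "0 < \<eta>" using e Cpos by (simp add: \<eta>_def)
    define \<delta> where "\<delta> = \<eta> powr (1/p)"
    have \<delta>pos: "0 < \<delta>" using \<eta>pos by (simp add: \<delta>_def)
    have "(INF f \<in> {f \<in> N1p_tilde p m \<mu> \<Gamma>s. \<forall>x\<in>F. f x \<ge> 1}. N1p_norm p m \<mu> \<Gamma>s f) < ennreal \<delta>"
      using assms(8) \<delta>pos by simp
    then obtain f where f: "f \<in> N1p_tilde p m \<mu> \<Gamma>s" "\<forall>x\<in>F. 1 \<le> f x" "N1p_norm p m \<mu> \<Gamma>s f < ennreal \<delta>"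
      unfolding INF_less_iff by auto
    have "Lp_norm_real p m f \<le> N1p_norm p m \<mu> \<Gamma>s f" unfolding N1p_norm_def by (rule add_increasing2) auto
    then have fl: "Lp_norm_real p m f < ennreal \<delta>" using f(3) by (rule le_less_trans)
    have "(INF \<rho> \<in> {\<rho>. weak_upper_gradient p m \<mu> \<Gamma>s f \<rho>}. Lp_norm_enn p m \<rho>) \<le> N1p_norm p m \<mu> \<Gamma>s f"
      unfolding N1p_norm_def by (rule add_increasing) auto
    then have "(INF \<rho> \<in> {\<rho>. weak_upper_gradient p m \<mu> \<Gamma>s f \<rho>}. Lp_norm_enn p m \<rho>) < ennreal \<delta>"
      using f(3) by (rule le_less_trans)
    then obtain \<rho> where \<rho>: "weak_upper_gradient p m \<mu> \<Gamma>s f \<rho>" "Lp_norm_enn p m \<rho> < ennreal \<delta>"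
      unfolding INF_less_iff by auto
    from \<rho>(1) obtain \<Gamma>0 where \<rho>m: "\<rho> \<in> borel_measurable borel" and \<Gamma>0: "\<Gamma>0 \<subseteq> \<Gamma>s" "Mod p m \<mu> \<Gamma>0 = 0"
      "\<forall>\<gamma>\<in>\<Gamma>s - \<Gamma>0. ennreal \<bar>f (start_pt \<gamma>) - f (end_pt \<gamma>)\<bar> \<le> line_int \<mu> \<gamma> \<rho>"
      unfolding weak_upper_gradient_def by blast
    have I1: "(\<integral>\<^sup>+x. epow (\<rho> x) p \<partial>m) < ennreal \<eta>"
      using \<rho>(2) unfolding Lp_norm_enn_def \<delta>_def by (rule small_int) (use assms(4) \<eta>pos in auto)
    have I2: "(\<integral>\<^sup>+x. ennreal (\<bar>f x\<bar> powr p) \<partial>m) < ennreal \<eta>"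
      using fl unfolding Lp_norm_real_def \<delta>_def by (rule small_int) (use assms(4) \<eta>pos in auto)
    obtain g0 where g0: "g0 \<in> borel_measurable borel" "\<forall>\<gamma>\<in>\<Gamma>0. 1 \<le> line_int \<mu> \<gamma> g0"
      "(\<integral>\<^sup>+x. epow (g0 x) p \<partial>m) < ennreal (e/2)"
      using Mod_zeroD[OF \<Gamma>0(2), of "ennreal (e/2)"] e by auto
    have fmm: "f \<in> borel_measurable m" using f(1) by (simp add: N1p_tilde_def)
    then have fm: "f \<in> borel_measurable borel" by (simp add: measurable_cong_sets[OF assms(2) refl])
    define h where "h x = max (ennreal 2 * \<rho> x) (ennreal (2 * real (Suc n)) * ennreal \<bar>f x\<bar>)" for x
    define H where "H x = max (h x) (g0 x)" for x
    have hm: "h \<in> borel_measurable borel" unfolding h_def using \<rho>m fm by measurable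
    have Hm: "H \<in> borel_measurable borel" unfolding H_def using hm g0(1) by measurable
    have Ha: "\<forall>\<gamma>\<in>G n. 1 \<le> line_int \<mu> \<gamma> H"
    proof
      fix \<gamma> assume \<gamma>: "\<gamma> \<in> G n"
      then have \<gamma>s: "\<gamma> \<in> \<Gamma>s" and big: "1 \<le> ennreal (real (Suc n)) * emeasure \<mu> (Im \<gamma>)"
        and hit: "Im \<gamma> \<inter> F \<noteq> {}" by (auto simp: G_def \<Gamma>F_def)
      show "1 \<le> line_int \<mu> \<gamma> H"
      proof (cases "\<exists>\<sigma>\<in>nontriv_subpaths \<gamma>. \<sigma> \<in> \<Gamma>0")
        case True
        then obtain \<sigma> where \<sigma>: "\<sigma> \<in> nontriv_subpaths \<gamma>" "\<sigma> \<in> \<Gamma>0" by auto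
        have "Im \<sigma> \<subseteq> Im \<gamma>" using \<sigma>(1) by (cases \<gamma>) (auto simp: nontriv_subpaths_def Im_def)
        then have "line_int \<mu> \<sigma> g0 \<le> line_int \<mu> \<gamma> H" by (intro line_int_mono) (auto simp: H_def)
        with g0(2) \<sigma>(2) show ?thesis by (meson order_trans)
      next
        case False
        obtain x0 where x0: "x0 \<in> Im \<gamma>" "x0 \<in> F" using hit by auto
        have "1 \<le> line_int \<mu> \<gamma> h" unfolding h_def
          by (rule key[OF assms(1) \<gamma>s assms(5) assms(6) x0(1) _ _ \<Gamma>0(3) \<rho>m big]) (use False f(2) x0 in auto)
        also have "\<dots> \<le> line_int \<mu> \<gamma> H" by (intro line_int_mono) (auto simp: H_def)
        finally show ?thesis .
      qed
    qed
    have m1: "(\<lambda>x. epow (\<rho> x) p) \<in> borel_measurable m" by (rule epow_meas[OF meas_conv[OF assms(2) \<rho>m]])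
    have m2: "(\<lambda>x. ennreal (\<bar>f x\<bar> powr p)) \<in> borel_measurable m" using fmm by measurable
    have hint: "(\<integral>\<^sup>+x. epow (h x) p \<partial>m) \<le> ennreal (e/4)"
    proof -
      have pt: "epow (h x) p \<le> ennreal (2 powr p) * epow (\<rho> x) p + ennreal (c powr p) * ennreal (\<bar>f x\<bar> powr p)" for x
      proof -
        have "epow (h x) p \<le> epow (ennreal 2 * \<rho> x) p + epow (ennreal c * ennreal \<bar>f x\<bar>) p"
          unfolding h_def c_def using assms(4) by (intro epow_max) auto
        also have "\<dots> = ennreal (2 powr p) * epow (\<rho> x) p + ennreal (c powr p) * ennreal (\<bar>f x\<bar> powr p)"
          using epow_cmult[of 2 "\<rho> x" p] epow_cmult[of c "ennreal \<bar>f x\<bar>" p] epow_ennreal[of "\<bar>f x\<bar>" p] cpos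
          by simp
        finally show ?thesis .
      qed
      have "(\<integral>\<^sup>+x. epow (h x) p \<partial>m) \<le> (\<integral>\<^sup>+x. ennreal (2 powr p) * epow (\<rho> x) p + ennreal (c powr p) * ennreal (\<bar>f x\<bar> powr p) \<partial>m)"
        by (intro nn_integral_mono pt)
      also have "\<dots> = ennreal (2 powr p) * (\<integral>\<^sup>+x. epow (\<rho> x) p \<partial>m) + ennreal (c powr p) * (\<integral>\<^sup>+x. ennreal (\<bar>f x\<bar> powr p) \<partial>m)"
        using m1 m2 by (subst nn_integral_add) (auto simp: nn_integral_cmult)
      also have "\<dots> \<le> ennreal (2 powr p) * ennreal \<eta> + ennreal (c powr p) * ennreal \<eta>"
        using I1 I2 by (intro add_mono mult_left_mono) auto
      also have "\<dots> = ennreal (2 powr p * \<eta>) + ennreal (c powr p * \<eta>)"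
        using \<eta>pos by (simp add: ennreal_mult)
      also have "\<dots> = ennreal (C * \<eta>)"
        unfolding C_def distrib_right by (rule ennreal_plus[symmetric]) (use \<eta>pos in auto)
      also have "C * \<eta> = e / 4" using Cpos by (simp add: \<eta>_def)
      finally show ?thesis .
    qed
    have "Mod p m \<mu> (G n) \<le> (\<integral>\<^sup>+x. epow (H x) p \<partial>m)" by (rule Mod_le[OF Hm Ha])
    also have "\<dots> \<le> (\<integral>\<^sup>+x. epow (h x) p + epow (g0 x) p \<partial>m)"
      unfolding H_def using assms(4) by (intro nn_integral_mono epow_max) auto
    also have "\<dots> = (\<integral>\<^sup>+x. epow (h x) p \<partial>m) + (\<integral>\<^sup>+x. epow (g0 x) p \<partial>m)"
      by (rule nn_integral_add[OF epow_meas[OF meas_conv[OF assms(2) hm]] epow_meas[OF meas_conv[OF assms(2) g0(1)]]])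
    also have "\<dots> \<le> ennreal (e/4) + ennreal (e/2)"
      using hint g0(3) by (intro add_mono) auto
    also have "\<dots> = ennreal (e/4 + e/2)" by (rule ennreal_plus[symmetric]) (use e in auto)
    also have "\<dots> \<le> ennreal e" using e by (intro ennreal_leI) auto
    finally show "Mod p m \<mu> (G n) \<le> ennreal e" .
  qed
  show ?thesis using Mod_countable[OF assms(4) assms(2) cov z] by (simp add: \<Gamma>F_def)
qed

end
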